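(* Let $E$ be a Banach lattice, $u_0\in E^+$, $\delta>0$, and let $x_1^*,\dots,x_N^*\in (E^* )^+$ be mutually disjoint. Suppose $\langle u_0,x_n^*\rangle\ge\delta$ for all $1\le n\le N$ and that there exists $y^*\in(E^* )^+$ with $$\{x_n^*\}_{n=1}^N\subseteq [-y^*,y^*]+\tfrac12\delta B_{\rho_{u_0}} .$$ Then $N\le 2\langle u_0,y^*\rangle/\delta$.
   Context: For $u_0\in E$, $\rho_{u_0}$ is the Riesz seminorm on $E^*$ given by $\rho_{u_0}(x^* )=\langle |u_0|,|x^*|\rangle$, and $B_{\rho_{u_0}}=\{x^*\in E^*:\rho_{u_0}(x^* )\le 1\}$. $[-y^*,y^*]$ is the order interval in $E^*$. *)

theory Defs
  imports "HOL-Analysis.Analysis" "HOL-Library.Lattice_Algebras"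
begin

class banach_lattice = banach + ordered_real_vector + lattice_ab_group_add_abs +
  assumes norm_lattice: "\<bar>x\<bar> \<le> \<bar>y\<bar> \<Longrightarrow> norm x \<le> norm y"

text \<open>The dual E* is represented by the bounded linear functionals
  (type of bounded linear maps to real) with the usual (dual cone) order.\<close>

definition dual_le :: "('a::banach_lattice \<Rightarrow>\<^sub>L real) \<Rightarrow> ('a \<Rightarrow>\<^sub>L real) \<Rightarrow> bool" where
  "dual_le f g \<longleftrightarrow> (\<forall>x. 0 \<le> x \<longrightarrow> blinfun_apply f x \<le> blinfun_apply g x)"

definition dual_pos :: "('a::banach_lattice \<Rightarrow>\<^sub>L real) \<Rightarrow> bool" where
  "dual_pos f \<longleftrightarrow> dual_le 0 f"

definition dual_interval :: "('a::banach_lattice \<Rightarrow>\<^sub>L real) \<Rightarrow> ('a \<Rightarrow>\<^sub>L real) set" where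
  "dual_interval y = {z. dual_le (- y) z \<and> dual_le z y}"

text \<open>Value of the modulus |f| of f in E* at a positive element x
  (Riesz--Kantorovich formula): |f|(x) = sup { f(y) : |y| \<le> x }.\<close>
definition dual_abs_at :: "('a::banach_lattice \<Rightarrow>\<^sub>L real) \<Rightarrow> 'a \<Rightarrow> real" where
  "dual_abs_at f x = Sup {blinfun_apply f y | y. \<bar>y\<bar> \<le> x}"

text \<open>Disjointness in E*: |f| \<sqinter> |g| = 0, where for positive functionals
  (p \<sqinter> q)(x) = inf { p(y) + q(x - y) : 0 \<le> y \<le> x } for x \<ge> 0.\<close>
definition dual_disjoint :: "('a::banach_lattice \<Rightarrow>\<^sub>L real) \<Rightarrow> ('a \<Rightarrow>\<^sub>L real) \<Rightarrow> bool" where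
  "dual_disjoint f g \<longleftrightarrow>
     (\<forall>x. 0 \<le> x \<longrightarrow> Inf {dual_abs_at f y + dual_abs_at g (x - y) | y. 0 \<le> y \<and> y \<le> x} = 0)"

definition rho :: "'a::banach_lattice \<Rightarrow> ('a \<Rightarrow>\<^sub>L real) \<Rightarrow> real" where
  "rho u0 f = dual_abs_at f \<bar>u0\<bar>"

definition rho_ball :: "'a::banach_lattice \<Rightarrow> ('a \<Rightarrow>\<^sub>L real) set" where
  "rho_ball u0 = {f. rho u0 f \<le> 1}"

end

theory Submission
  imports Defs
begin

lemma pos_mono:
  fixes f :: "'a::banach_lattice \<Rightarrow>\<^sub>L real"
  assumes "dual_pos f" "a \<le> b"
  shows "blinfun_apply f a \<le> blinfun_apply f b"
proof -
  have "0 \<le> blinfun_apply f (b - a)" using assms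
    unfolding dual_pos_def dual_le_def by auto
  thus ?thesis by (simp add: blinfun.diff_right)
qed

lemma pos_nonneg:
  fixes f :: "'a::banach_lattice \<Rightarrow>\<^sub>L real"
  assumes "dual_pos f" "0 \<le> a"
  shows "0 \<le> blinfun_apply f a"
  using pos_mono[OF assms] by simp

lemma abs_at_pos:
  fixes f :: "'a::banach_lattice \<Rightarrow>\<^sub>L real"
  assumes "dual_pos f" "0 \<le> a"
  shows "dual_abs_at f a = blinfun_apply f a"
  unfolding dual_abs_at_def
proof (rule cSup_eq_maximum)
  show "blinfun_apply f a \<in> {blinfun_apply f y |y. \<bar>y\<bar> \<le> a}"
    using assms(2) by auto
  fix t assume "t \<in> {blinfun_apply f y |y. \<bar>y\<bar> \<le> a}"
  then obtain z where z: "t = blinfun_apply f z" "\<bar>z\<bar> \<le> a" by auto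
  have "z \<le> a" using abs_ge_self[of z] z(2) by (rule order_trans)
  thus "t \<le> blinfun_apply f a" using pos_mono[OF assms(1)] z(1) by auto
qed

lemma disj_split:
  fixes f g :: "'a::banach_lattice \<Rightarrow>\<^sub>L real"
  assumes "dual_pos f" "dual_pos g" "dual_disjoint f g" "0 \<le> r" "e > 0"
  shows "\<exists>a. 0 \<le> a \<and> a \<le> r \<and> blinfun_apply f a + blinfun_apply g (r - a) < e"
proof -
  let ?S = "{dual_abs_at f y + dual_abs_at g (r - y) | y. 0 \<le> y \<and> y \<le> r}"
  have "Inf ?S = 0" using assms(3,4) unfolding dual_disjoint_def by auto
  hence lt: "Inf ?S < e" using assms(5) by simp
  have ne: "?S \<noteq> {}"
  proof -
    have "dual_abs_at f 0 + dual_abs_at g (r - 0) \<in> ?S" using assms(4) by (intro CollectI exI[of _ 0]) simp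
    thus ?thesis by blast
  qed
  obtain t where "t \<in> ?S" "t < e" using cInf_lessD[OF ne lt] by blast
  then obtain a where a: "0 \<le> a" "a \<le> r" "t = dual_abs_at f a + dual_abs_at g (r - a)" by auto
  have "dual_abs_at f a = blinfun_apply f a" using abs_at_pos[OF assms(1) a(1)] .
  moreover have "dual_abs_at g (r - a) = blinfun_apply g (r - a)"
    using abs_at_pos[OF assms(2)] a(2) by simp
  ultimately show ?thesis using a \<open>t < e\<close> by auto
qed

lemma sup_le_add:
  fixes a b :: "'a::banach_lattice"
  assumes "0 \<le> a" "0 \<le> b"
  shows "sup a b \<le> a + b"
proof (rule sup_least)
  show "a \<le> a + b" using assms(2) by (simp add: add_increasing2)
  show "b \<le> a + b" using assms(1) by (simp add: add_increasing)
qed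

lemma multi_split:
  fixes x :: "nat \<Rightarrow> ('a::banach_lattice \<Rightarrow>\<^sub>L real)"
  assumes "finite S" "dual_pos (x n)" "\<forall>m\<in>S. dual_pos (x m) \<and> dual_disjoint (x n) (x m)"
  shows "\<forall>r e. 0 \<le> r \<longrightarrow> e > 0 \<longrightarrow> (\<exists>r'. 0 \<le> r' \<and> r' \<le> r \<and> blinfun_apply (x n) r' \<le> e
       \<and> (\<forall>m\<in>S. blinfun_apply (x m) (r - r') \<le> e))"
  using assms(1,3)
proof (induction S rule: finite_induct)
  case empty
  then show ?case by (intro allI impI exI[of _ 0]) auto
next
  case (insert m S)
  show ?case
  proof (intro allI impI)
    fix r :: 'a and e :: real
    assume r: "0 \<le> r" and e: "e > 0"
    from insert have IH: "\<forall>r e. 0 \<le> r \<longrightarrow> e > 0 \<longrightarrow> (\<exists>r'. 0 \<le> r' \<and> r' \<le> r \<and> blinfun_apply (x n) r' \<le> e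
       \<and> (\<forall>m\<in>S. blinfun_apply (x m) (r - r') \<le> e))" by auto
    obtain r1 where r1: "0 \<le> r1" "r1 \<le> r" "blinfun_apply (x n) r1 \<le> e/2"
       "\<forall>k\<in>S. blinfun_apply (x k) (r - r1) \<le> e/2"
      using IH r e by (metis half_gt_zero)
    have pm: "dual_pos (x m)" "dual_disjoint (x n) (x m)" using insert by auto
    obtain a where a: "0 \<le> a" "a \<le> r" "blinfun_apply (x n) a + blinfun_apply (x m) (r - a) < e/2"
      using disj_split[OF assms(2) pm r] e by (metis half_gt_zero)
    have xa: "blinfun_apply (x n) a \<ge> 0" "blinfun_apply (x m) (r - a) \<ge> 0"
      using pos_nonneg[OF assms(2) a(1)] pos_nonneg[OF pm(1)] a(2) by auto
    define r' where "r' = sup r1 a"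
    have c1: "0 \<le> r'" unfolding r'_def using r1(1) le_supI1 by blast
    have c2: "r' \<le> r" unfolding r'_def using r1(2) a(2) by simp
    have c3: "blinfun_apply (x n) r' \<le> e"
    proof -
      have "blinfun_apply (x n) r' \<le> blinfun_apply (x n) (r1 + a)"
        using pos_mono[OF assms(2) sup_le_add[OF r1(1) a(1)]] r'_def by simp
      also have "\<dots> = blinfun_apply (x n) r1 + blinfun_apply (x n) a"
        by (simp add: blinfun.add_right)
      finally show ?thesis using r1(3) a(3) xa by linarith
    qed
    have c4: "\<forall>k\<in>insert m S. blinfun_apply (x k) (r - r') \<le> e"
    proof
      fix k assume k: "k \<in> insert m S"
      have pk: "dual_pos (x k)" using insert k by auto
      show "blinfun_apply (x k) (r - r') \<le> e"
      proof (cases "k = m")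
        case True
        have "blinfun_apply (x k) (r - r') \<le> blinfun_apply (x k) (r - a)"
          using pos_mono[OF pk, of "r - r'" "r - a"] unfolding r'_def by simp
        then show ?thesis using a(3) xa unfolding True by linarith
      next
        case False
        hence "k \<in> S" using k by auto
        have "blinfun_apply (x k) (r - r') \<le> blinfun_apply (x k) (r - r1)"
          using pos_mono[OF pk, of "r - r'" "r - r1"] unfolding r'_def by simp
        moreover have "blinfun_apply (x k) (r - r1) \<le> e/2" using r1(4) \<open>k \<in> S\<close> by blast
        ultimately show ?thesis using e by linarith
      qed
    qed
    show "\<exists>r'. 0 \<le> r' \<and> r' \<le> r \<and> blinfun_apply (x n) r' \<le> e
       \<and> (\<forall>m\<in>insert m S. blinfun_apply (x m) (r - r') \<le> e)"
      by (rule exI[of _ r']) (intro conjI c1 c2 c3 c4)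
  qed
qed

theorem lemma3p4:
  fixes u0 :: "'a::banach_lattice" and \<delta> :: real and N :: nat
    and x :: "nat \<Rightarrow> ('a \<Rightarrow>\<^sub>L real)" and y :: "'a \<Rightarrow>\<^sub>L real"
  assumes "0 \<le> u0"
    and "\<delta> > 0"
    and "\<forall>n\<in>{1..N}. dual_pos (x n)"
    and "\<forall>n\<in>{1..N}. \<forall>m\<in>{1..N}. n \<noteq> m \<longrightarrow> dual_disjoint (x n) (x m)"
    and "\<forall>n\<in>{1..N}. blinfun_apply (x n) u0 \<ge> \<delta>"
    and "dual_pos y"
    and "x ` {1..N} \<subseteq> {z + (\<delta> / 2) *\<^sub>R w | z w. z \<in> dual_interval y \<and> w \<in> rho_ball u0}"
  shows "real N \<le> 2 * blinfun_apply y u0 / \<delta>"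
proof -
  have bound: "blinfun_apply (x n) v - \<delta>/2 \<le> blinfun_apply y v"
    if n: "n \<in> {1..N}" and v: "0 \<le> v" "v \<le> u0" for n v
  proof -
    obtain z w where zw: "x n = z + (\<delta> / 2) *\<^sub>R w" "z \<in> dual_interval y" "w \<in> rho_ball u0"
      using assms(7) n by blast
    have "blinfun_apply z v \<le> blinfun_apply y v"
      using zw(2) v unfolding dual_interval_def dual_le_def by auto
    moreover have "blinfun_apply w v \<le> 1"
    proof -
      let ?S = "{blinfun_apply w t |t. \<bar>t\<bar> \<le> \<bar>u0\<bar>}"
      have bdd: "bdd_above ?S"
      proof (rule bdd_aboveI)
        fix s assume "s \<in> ?S"
        then obtain t where t: "s = blinfun_apply w t" "\<bar>t\<bar> \<le> \<bar>u0\<bar>" by auto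
        have "s \<le> norm w * norm t" using t(1) norm_blinfun[of w t]
          by (metis abs_le_D1 real_norm_def)
        also have "\<dots> \<le> norm w * norm u0"
          using norm_lattice[OF t(2)] by (simp add: mult_left_mono)
        finally show "s \<le> norm w * norm u0" .
      qed
      have mem: "blinfun_apply w v \<in> ?S" using v assms(1) by auto
      have "blinfun_apply w v \<le> Sup ?S" by (rule cSup_upper[OF mem bdd])
      also have "Sup ?S \<le> 1" using zw(3) unfolding rho_ball_def rho_def dual_abs_at_def by simp
      finally show ?thesis .
    qed
    moreover have "(\<delta>/2) * blinfun_apply w v \<le> (\<delta>/2) * 1"
      using assms(2) calculation(2) by (intro mult_left_mono) auto
    ultimately show ?thesis using zw(1)
      by (simp add: blinfun.add_left blinfun.scaleR_left)
  qed
  have claim: "\<forall>r. 0 \<le> r \<longrightarrow> r \<le> u0 \<longrightarrow> (\<Sum>m\<in>S. blinfun_apply (x m) r - \<delta>/2) \<le> blinfun_apply y r"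
    if "S \<subseteq> {1..N}" for S
  proof -
    have "finite S" using that finite_subset by blast
    then show ?thesis using that
    proof (induction S rule: finite_induct)
      case empty
      then show ?case using pos_nonneg[OF assms(6)] by simp
    next
      case (insert n S)
      show ?case
      proof (intro allI impI)
        fix r assume r: "0 \<le> r" "r \<le> u0"
        have nN: "n \<in> {1..N}" using insert by auto
        have pn: "dual_pos (x n)" using assms(3) nN by auto
        have SS: "\<forall>m\<in>S. dual_pos (x m) \<and> dual_disjoint (x n) (x m)"
        proof
          fix m assume "m \<in> S"
          hence mm: "m \<noteq> n" "m \<in> {1..N}" using insert by auto
          show "dual_pos (x m) \<and> dual_disjoint (x n) (x m)"
            using bspec[OF assms(3) mm(2)] assms(4)[rule_format, OF nN mm(2)] mm(1) by auto
        qed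
        show "(\<Sum>m\<in>insert n S. blinfun_apply (x m) r - \<delta>/2) \<le> blinfun_apply y r"
        proof (rule field_le_epsilon)
          fix e :: real assume e: "0 < e"
          define e' where "e' = e / (card S + 1)"
          have e': "e' > 0" using e unfolding e'_def by simp
          obtain r' where r': "0 \<le> r'" "r' \<le> r" "blinfun_apply (x n) r' \<le> e'"
            "\<forall>m\<in>S. blinfun_apply (x m) (r - r') \<le> e'"
            using multi_split[OF insert(1) pn SS] r(1) e' by blast
          have IH: "(\<Sum>m\<in>S. blinfun_apply (x m) r' - \<delta>/2) \<le> blinfun_apply y r'"
          proof -
            have "S \<subseteq> {1..N}" using insert(4) by simp
            hence H: "\<forall>r\<ge>0. r \<le> u0 \<longrightarrow> (\<Sum>m\<in>S. blinfun_apply (x m) r - \<delta>/2) \<le> blinfun_apply y r"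
              using insert(3) by simp
            have "r' \<le> u0" using r'(2) r(2) by (rule order_trans)
            thus ?thesis using H r'(1) by blast
          qed
          have "(\<Sum>m\<in>S. blinfun_apply (x m) r - \<delta>/2) \<le> (\<Sum>m\<in>S. blinfun_apply (x m) r' - \<delta>/2 + e')"
          proof (rule sum_mono)
            fix m assume "m \<in> S"
            have "blinfun_apply (x m) r = blinfun_apply (x m) r' + blinfun_apply (x m) (r - r')"
              by (simp add: blinfun.diff_right)
            then show "blinfun_apply (x m) r - \<delta>/2 \<le> blinfun_apply (x m) r' - \<delta>/2 + e'"
              using r'(4) \<open>m \<in> S\<close> by auto
          qed
          also have "\<dots> = (\<Sum>m\<in>S. blinfun_apply (x m) r' - \<delta>/2) + card S * e'"
            by (simp add: sum.distrib)
          finally have A: "(\<Sum>m\<in>S. blinfun_apply (x m) r - \<delta>/2) \<le> blinfun_apply y r' + card S * e'"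
            using IH by linarith
          have B: "blinfun_apply (x n) (r - r') - \<delta>/2 \<le> blinfun_apply y (r - r')"
            using bound[OF nN] r r' by (meson diff_ge_0_iff_ge diff_le_eq le_add_same_cancel1 order_trans)
          have C: "blinfun_apply (x n) r = blinfun_apply (x n) r' + blinfun_apply (x n) (r - r')"
            "blinfun_apply y r = blinfun_apply y r' + blinfun_apply y (r - r')"
            by (simp_all add: blinfun.diff_right)
          have D: "(card S + 1) * e' = e" unfolding e'_def by simp
          have "(\<Sum>m\<in>insert n S. blinfun_apply (x m) r - \<delta>/2)
              = blinfun_apply (x n) r - \<delta>/2 + (\<Sum>m\<in>S. blinfun_apply (x m) r - \<delta>/2)"
            using insert by simp
          also have "\<dots> \<le> blinfun_apply y r + (card S + 1) * e'"
            using A B C r'(3) by (simp add: algebra_simps)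
          finally show "(\<Sum>m\<in>insert n S. blinfun_apply (x m) r - \<delta>/2) \<le> blinfun_apply y r + e"
            using D by simp
        qed
      qed
    qed
  qed
  have "(\<Sum>m\<in>{1..N}. \<delta>/2) \<le> (\<Sum>m\<in>{1..N}. blinfun_apply (x m) u0 - \<delta>/2)"
    using assms(5) by (intro sum_mono) auto
  also have "\<dots> \<le> blinfun_apply y u0" using claim[of "{1..N}"] assms(1) by simp
  finally have "real N * (\<delta>/2) \<le> blinfun_apply y u0" by simp
  then show ?thesis using assms(2) by (simp add: field_simps)
qed

end
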